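(* Let $\nu,\lambda$ be the $\boxplus$-infinitely divisible probability measures with Voiculescu transforms $\phi_\nu(z)=\frac{1}{z-1}$ and $\phi_\lambda(z)=\frac{1}{z+1}$. Then $\nu,\lambda\in\mathcal{UI}$ but $\nu\boxplus\lambda\notin\mathcal{UI}$ (where $\phi_{\nu\boxplus\lambda}(z)=\frac1{z-1}+\frac1{z+1}$). In particular $\mathcal{UI}$ is not closed under $\boxplus$, and $\mathcal{UI}$ is a proper subset of the set of $\boxplus$-infinitely divisible distributions.
   Context: For a probability measure $\mu$ on $\mathbb{R}$, $F_\mu(z)=1/\int\frac{\mu(dx)}{z-x}$ on $\mathbb{C}_+$; the Voiculescu transform is $\phi_\mu(z)=F_\mu^{-1}(z)-z$ on a truncated cone $\{\operatorname{Im}z>M,\operatorname{Im}z>\eta|\operatorname{Re}z|\}$, and $\phi_{\mu\boxplus\nu}=\phi_\mu+\phi_\nu$ there ($\boxplus$ = free additive convolution). Any analytic $\phi:\mathbb{C}_+\to\mathbb{C}_-\cup\mathbb{R}$ with $\phi(z)=o(|z|)$ nontangentially at infinity (as here) is the Voiculescu transform of a unique $\boxplus$-infinitely divisible measure. $\mu\in\mathcal{UI}$ means: $F_\mu$ is univalent on $\mathbb{C}_+$ and $F_\mu^{-1}:F_\mu(\mathbb{C}_+)\to\mathbb{C}_+$ extends analytically to a univalent function on $\mathbb{C}_+$. *)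

theory Defs
  imports "HOL-Probability.Probability"
begin

definition upper_half :: "complex set" where
  "upper_half = {z. Im z > 0}"

definition real_prob_measure :: "real measure \<Rightarrow> bool" where
  "real_prob_measure \<mu> \<longleftrightarrow> prob_space \<mu> \<and> sets \<mu> = sets borel"

definition cauchy_transform :: "real measure \<Rightarrow> complex \<Rightarrow> complex" where
  "cauchy_transform \<mu> z = integral\<^sup>L \<mu> (\<lambda>x. 1 / (z - complex_of_real x))"

definition F_transform :: "real measure \<Rightarrow> complex \<Rightarrow> complex" where
  "F_transform \<mu> z = 1 / cauchy_transform \<mu> z"

definition trunc_cone :: "real \<Rightarrow> real \<Rightarrow> complex set" where
  "trunc_cone \<eta> M = {z. Im z > M \<and> Im z > \<eta> * \<bar>Re z\<bar>}"

text \<open>phi is the Voiculescu transform of mu: on some truncated cone,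
  z + phi z = F_mu^{-1}(z), i.e. z + phi z lies in the upper half plane and
  F_mu (z + phi z) = z.\<close>
definition has_voiculescu_transform :: "real measure \<Rightarrow> (complex \<Rightarrow> complex) \<Rightarrow> bool" where
  "has_voiculescu_transform \<mu> \<phi> \<longleftrightarrow>
     (\<exists>\<eta>>0. \<exists>M>0. \<forall>z\<in>trunc_cone \<eta> M.
        z + \<phi> z \<in> upper_half \<and> F_transform \<mu> (z + \<phi> z) = z)"

text \<open>The class UI: F_mu univalent on the upper half plane, and its inverse
  (defined on F_mu(upper half plane)) extends to an analytic univalent function
  on the upper half plane.\<close>
definition UI :: "real measure \<Rightarrow> bool" where
  "UI \<mu> \<longleftrightarrow> inj_on (F_transform \<mu>) upper_half \<and>
     (\<exists>h. h holomorphic_on upper_half \<and> inj_on h upper_half \<and>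
          (\<forall>z\<in>upper_half. h (F_transform \<mu> z) = z))"

end

theory Submission imports Defs "HOL-Complex_Analysis.Complex_Analysis" begin

lemma rpm_integrable:
  fixes f :: "real \<Rightarrow> complex"
  assumes "real_prob_measure \<mu>" "continuous_on UNIV f" "\<And>x. norm (f x) \<le> B"
  shows "integrable \<mu> f"
proof -
  interpret prob_space \<mu> using assms(1) unfolding real_prob_measure_def by auto
  have "f \<in> borel_measurable borel" using assms(2) by (rule borel_measurable_continuous_onI)
  moreover have "sets \<mu> = sets borel" using assms(1) unfolding real_prob_measure_def by auto
  ultimately have m: "f \<in> borel_measurable \<mu>"
    using measurable_cong_sets[of \<mu> borel borel borel] by auto
  show ?thesis by (rule integrable_const_bound[where B=B]) (use assms(3) m in auto)
qed

lemma rpm_norm_bound: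
  fixes f :: "real \<Rightarrow> complex"
  assumes "real_prob_measure \<mu>" "continuous_on UNIV f" "\<And>x. norm (f x) \<le> B"
  shows "norm (integral\<^sup>L \<mu> f) \<le> B"
proof -
  interpret prob_space \<mu> using assms(1) unfolding real_prob_measure_def by auto
  have i: "integrable \<mu> f" by (rule rpm_integrable[OF assms])
  have "norm (integral\<^sup>L \<mu> f) \<le> integral\<^sup>L \<mu> (\<lambda>x. norm (f x))"
    by (rule integral_norm_bound)
  also have "\<dots> \<le> integral\<^sup>L \<mu> (\<lambda>x. B)"
    by (rule integral_mono) (use i assms(3) in auto)
  also have "\<dots> = B" using prob_space by simp
  finally show ?thesis .
qed

lemma norm_sub_real_ge: "Im z \<le> norm (z - complex_of_real x)"
proof -
  have "Im z = Im (z - complex_of_real x)" by simp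
  also have "\<dots> \<le> norm (z - complex_of_real x)" using abs_Im_le_cmod abs_ge_self order_trans by blast
  finally show ?thesis .
qed

lemma cont_recip: "Im z > 0 \<Longrightarrow> continuous_on UNIV (\<lambda>x::real. 1 / (z - complex_of_real x))"
  by (intro continuous_intros) (auto simp: complex_eq_iff)

lemma norm_recip: assumes "Im z > 0" shows "norm (1 / (z - complex_of_real x)) \<le> 1 / Im z"
proof -
  have "Im z \<le> norm (z - complex_of_real x)" by (rule norm_sub_real_ge)
  then show ?thesis using assms by (simp add: norm_divide frac_le)
qed
lemma nz_sub: "Im z > 0 \<Longrightarrow> z - complex_of_real x \<noteq> 0"
  by (auto simp: complex_eq_iff)

lemma cont_recip2: "Im z > 0 \<Longrightarrow> continuous_on UNIV (\<lambda>x::real. 1 / (z - complex_of_real x)^2)"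
  by (intro continuous_intros) (use nz_sub[of z] in auto)

lemma norm_recip2: assumes "Im z > 0" shows "norm (1 / (z - complex_of_real x)^2) \<le> 1 / Im z ^ 2"
proof -
  have "Im z \<le> norm (z - complex_of_real x)" by (rule norm_sub_real_ge)
  then have "Im z ^ 2 \<le> norm (z - complex_of_real x) ^ 2" using assms by (intro power_mono) auto
  then show ?thesis using assms by (simp add: norm_divide norm_power frac_le)
qed

lemma field_id_aux:
  fixes a b :: complex
  assumes "a \<noteq> 0" "b \<noteq> 0" "a - b \<noteq> 0"
  shows "(1 / a - 1 / b) / (a - b) + 1 / b^2 = (a - b) / (a * b^2)"
  using assms by (simp add: field_simps power2_eq_square)

lemma field_id:
  fixes w z x :: complex
  assumes "w - x \<noteq> 0" "z - x \<noteq> 0" "w - z \<noteq> 0"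
  shows "(1 / (w - x) - 1 / (z - x)) / (w - z) + 1 / (z - x)^2 = (w - z) / ((w - x) * (z - x)^2)"
  using field_id_aux[of "w - x" "z - x"] assms by simp

lemma G_deriv:
  assumes mu: "real_prob_measure \<mu>" and z: "Im z > 0"
  shows "(cauchy_transform \<mu> has_field_derivative
           - integral\<^sup>L \<mu> (\<lambda>x. 1 / (z - complex_of_real x)^2)) (at z)"
proof -
  define D where "D = - integral\<^sup>L \<mu> (\<lambda>x. 1 / (z - complex_of_real x)^2)"
  define G where "G = cauchy_transform \<mu>"
  define C where "C = 2 / Im z ^ 3"
  have "((\<lambda>w. Im w) \<longlongrightarrow> Im z) (at z)" by (intro tendsto_intros)
  from order_tendstoD(1)[OF this, of "Im z / 2"] z
  have ev1: "eventually (\<lambda>w. Im w > Im z / 2) (at z)" by simp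
  have ev2: "eventually (\<lambda>w. w \<noteq> z) (at z)" by (simp add: eventually_at_filter)
  have key: "norm ((G w - G z) / (w - z) - D) \<le> norm (w - z) * C"
    if w: "Im w > Im z / 2" and wz: "w \<noteq> z" for w
  proof -
    have wpos: "Im w > 0" using w z by simp
    have i1: "integrable \<mu> (\<lambda>x. 1 / (w - complex_of_real x))"
      by (rule rpm_integrable[OF mu cont_recip[OF wpos] norm_recip[OF wpos]])
    have i2: "integrable \<mu> (\<lambda>x. 1 / (z - complex_of_real x))"
      by (rule rpm_integrable[OF mu cont_recip[OF z] norm_recip[OF z]])
    have i3: "integrable \<mu> (\<lambda>x. 1 / (z - complex_of_real x)^2)"
      by (rule rpm_integrable[OF mu cont_recip2[OF z] norm_recip2[OF z]])
    have i4: "integrable \<mu> (\<lambda>x. (1 / (w - complex_of_real x) - 1 / (z - complex_of_real x)) / (w - z))"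
      using i1 i2 by auto
    have "(G w - G z) / (w - z) - D =
       integral\<^sup>L \<mu> (\<lambda>x. (1 / (w - complex_of_real x) - 1 / (z - complex_of_real x)) / (w - z)
           + 1 / (z - complex_of_real x)^2)"
      unfolding G_def D_def cauchy_transform_def
      by (simp only: Bochner_Integration.integral_add[OF i4 i3] integral_divide_zero Bochner_Integration.integral_diff[OF i1 i2]) simp
    also have "\<dots> = integral\<^sup>L \<mu> (\<lambda>x. (w - z) / ((w - complex_of_real x) * (z - complex_of_real x)^2))"
    proof (rule Bochner_Integration.integral_cong[OF refl])
      fix x
      have a: "w - complex_of_real x \<noteq> 0" using wpos by (auto simp: complex_eq_iff)
      have b: "z - complex_of_real x \<noteq> 0" using z by (auto simp: complex_eq_iff)
      have c: "w - z \<noteq> 0" using wz by simp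
      show "(1 / (w - complex_of_real x) - 1 / (z - complex_of_real x)) / (w - z)
           + 1 / (z - complex_of_real x)^2 = (w - z) / ((w - complex_of_real x) * (z - complex_of_real x)^2)"
        using a b c by (rule field_id)
    qed
    also have "norm \<dots> \<le> norm (w - z) * C"
    proof (rule rpm_norm_bound[OF mu])
      show "continuous_on UNIV (\<lambda>x. (w - z) / ((w - complex_of_real x) * (z - complex_of_real x)^2))"
        by (intro continuous_intros) (use nz_sub[of w] nz_sub[of z] wpos z in auto)
      fix x
      have a: "Im w \<le> norm (w - complex_of_real x)" by (rule norm_sub_real_ge)
      have b: "Im z \<le> norm (z - complex_of_real x)" by (rule norm_sub_real_ge)
      have "(Im z / 2) * Im z ^ 2 \<le> norm (w - complex_of_real x) * norm (z - complex_of_real x) ^ 2"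
        using a b w z by (intro mult_mono power_mono) auto
      moreover have "(Im z / 2) * Im z ^ 2 > 0" using z by simp
      ultimately have "norm (w - z) / (norm (w - complex_of_real x) * norm (z - complex_of_real x) ^ 2)
          \<le> norm (w - z) / ((Im z / 2) * Im z ^ 2)"
        by (intro divide_left_mono) auto
      also have "\<dots> = norm (w - z) * C" unfolding C_def by (simp add: power3_eq_cube power2_eq_square)
      finally show "norm ((w - z) / ((w - complex_of_real x) * (z - complex_of_real x)^2)) \<le> norm (w - z) * C"
        by (simp add: norm_divide norm_mult norm_power)
    qed
    finally show ?thesis .
  qed
  have "((\<lambda>w. (G w - G z) / (w - z) - D) \<longlongrightarrow> 0) (at z)"
  proof (rule Lim_null_comparison)
    show "eventually (\<lambda>w. norm ((G w - G z) / (w - z) - D) \<le> norm (w - z) * C) (at z)"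
      using ev1 ev2 by eventually_elim (rule key)
    have "((\<lambda>w. norm (w - z) * C) \<longlongrightarrow> norm (z - z) * C) (at z)" by (intro tendsto_intros)
    then show "((\<lambda>w. norm (w - z) * C) \<longlongrightarrow> 0) (at z)" by simp
  qed
  then have "((\<lambda>w. (G w - G z) / (w - z)) \<longlongrightarrow> D) (at z)" by (simp add: LIM_zero_iff)
  then show ?thesis unfolding G_def D_def by (simp add: has_field_derivative_iff)
qed


lemma Im_recip_neg: assumes "Im w > 0" shows "Im (1 / w) < 0"
proof -
  have "(Re w)\<^sup>2 + (Im w)\<^sup>2 > 0" using assms by (simp add: add_nonneg_pos)
  then show ?thesis using assms by (simp add: Im_divide divide_pos_pos)
qed

lemma Im_recip_pos: assumes "Im w < 0" shows "Im (1 / w) > 0"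
proof -
  have "(Im w)\<^sup>2 > 0" using assms by simp
  then have "(Re w)\<^sup>2 + (Im w)\<^sup>2 > 0" by (simp add: add_nonneg_pos)
  then show ?thesis using assms by (simp add: Im_divide divide_neg_pos)
qed

lemma G_Im_neg:
  assumes mu: "real_prob_measure \<mu>" and z: "Im z > 0"
  shows "Im (cauchy_transform \<mu> z) < 0"
proof -
  interpret prob_space \<mu> using mu unfolding real_prob_measure_def by auto
  have i: "integrable \<mu> (\<lambda>x. 1 / (z - complex_of_real x))"
    by (rule rpm_integrable[OF mu cont_recip[OF z] norm_recip[OF z]])
  define g where "g x = - Im (1 / (z - complex_of_real x))" for x
  have ig: "integrable \<mu> g" unfolding g_def using i by auto
  have gpos: "g x > 0" for x
  proof -
    have "Im (z - complex_of_real x) > 0" using z by simp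
    from Im_recip_neg[OF this] show ?thesis unfolding g_def by simp
  qed
  have ge: "integral\<^sup>L \<mu> g \<ge> 0"
    by (rule integral_nonneg_AE) (simp add: less_imp_le gpos)
  have ne: "integral\<^sup>L \<mu> g \<noteq> 0"
  proof
    assume "integral\<^sup>L \<mu> g = 0"
    then have "AE x in \<mu>. g x = 0"
      using integral_nonneg_eq_0_iff_AE[OF ig] by (simp add: less_imp_le gpos)
    then have "AE x in \<mu>. False" by eventually_elim (metis gpos less_irrefl)
    then show False by (simp add: AE_False)
  qed
  have "Im (cauchy_transform \<mu> z) = - integral\<^sup>L \<mu> g"
    unfolding cauchy_transform_def g_def using integral_Im[OF i] by simp
  then show ?thesis using ge ne by simp
qed

lemma G_holo: assumes mu: "real_prob_measure \<mu>" shows "cauchy_transform \<mu> holomorphic_on upper_half"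
  unfolding upper_half_def
  using G_deriv[OF mu] by (subst holomorphic_on_open) (auto simp: open_halfspace_Im_gt)

lemma F_holo: assumes mu: "real_prob_measure \<mu>" shows "F_transform \<mu> holomorphic_on upper_half"
proof -
  have "(\<lambda>z. 1 / cauchy_transform \<mu> z) holomorphic_on upper_half"
  proof (intro holomorphic_intros G_holo[OF mu])
    fix z assume "z \<in> upper_half"
    then have "Im (cauchy_transform \<mu> z) < 0" using G_Im_neg[OF mu] by (simp add: upper_half_def)
    then show "cauchy_transform \<mu> z \<noteq> 0" by auto
  qed
  then show ?thesis unfolding F_transform_def[abs_def] .
qed

lemma F_Im: assumes mu: "real_prob_measure \<mu>" and z: "Im z > 0" shows "Im (F_transform \<mu> z) > 0"
  unfolding F_transform_def using Im_recip_pos[OF G_Im_neg[OF mu z]] .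

lemma upper_open: "open upper_half" unfolding upper_half_def by (rule open_halfspace_Im_gt)
lemma upper_connected: "connected upper_half"
  unfolding upper_half_def by (rule convex_connected[OF convex_halfspace_Im_gt])

lemma cone_open: "open (trunc_cone \<eta> M)"
  unfolding trunc_cone_def by (intro open_Collect_conj open_Collect_less continuous_intros)

lemma cone_point: assumes "M > 0" "\<eta> > 0"
  shows "\<i> * complex_of_real (M + 1) \<in> trunc_cone \<eta> M"
  using assms unfolding trunc_cone_def by simp

lemma cone_limpt: assumes "z0 \<in> trunc_cone \<eta> M" shows "z0 islimpt trunc_cone \<eta> M"
  using assms cone_open by (intro interior_limit_point) (simp add: interior_open)


lemma H_inj:
  fixes c :: real
  shows "inj_on (\<lambda>w. w + 1 / (w - complex_of_real c)) upper_half"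
proof (rule inj_onI)
  fix a b assume a: "a \<in> upper_half" and b: "b \<in> upper_half"
    and eq: "a + 1 / (a - complex_of_real c) = b + 1 / (b - complex_of_real c)"
  have ia: "Im a > 0" and ib: "Im b > 0" using a b by (auto simp: upper_half_def)
  have na: "a - complex_of_real c \<noteq> 0" using ia by (auto simp: complex_eq_iff)
  have nb: "b - complex_of_real c \<noteq> 0" using ib by (auto simp: complex_eq_iff)
  show "a = b"
  proof (rule ccontr)
    assume ab: "a \<noteq> b"
    have "(a - b) * ((a - complex_of_real c) * (b - complex_of_real c) - 1) = 0"
      using eq na nb by (simp add: field_simps)
    then have "(a - complex_of_real c) * (b - complex_of_real c) = 1" using ab by simp
    then have "a - complex_of_real c = 1 / (b - complex_of_real c)" using nb by (simp add: field_simps)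
    then have "Im (a - complex_of_real c) = Im (1 / (b - complex_of_real c))" by simp
    moreover have "Im (1 / (b - complex_of_real c)) < 0" using ib by (intro Im_recip_neg) simp
    ultimately show False using ia by simp
  qed
qed

lemma UI_from_phi:
  fixes c :: real
  assumes mu: "real_prob_measure \<mu>"
    and vt: "has_voiculescu_transform \<mu> (\<lambda>z. 1 / (z - complex_of_real c))"
  shows "UI \<mu>"
proof -
  define H where "H w = w + 1 / (w - complex_of_real c)" for w
  define F where "F = F_transform \<mu>"
  have Hinj: "inj_on H upper_half" unfolding H_def[abs_def] by (rule H_inj)
  have nzc: "w - complex_of_real c \<noteq> 0" if "w \<in> upper_half" for w
    using that by (auto simp: upper_half_def complex_eq_iff)
  have Hholo: "H holomorphic_on upper_half"
    unfolding H_def[abs_def] by (intro holomorphic_intros) (use nzc in auto)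
  from vt obtain \<eta> M where eta: "\<eta> > 0" and M: "M > 0"
    and cone0: "\<forall>z\<in>trunc_cone \<eta> M. z + 1 / (z - complex_of_real c) \<in> upper_half \<and>
        F_transform \<mu> (z + 1 / (z - complex_of_real c)) = z"
    unfolding has_voiculescu_transform_def by blast
  have cone: "H z \<in> upper_half \<and> F (H z) = z" if "z \<in> trunc_cone \<eta> M" for z
    using cone0 that unfolding H_def F_def by blast
  define z0 where "z0 = \<i> * complex_of_real (M + 1)"
  have z0: "z0 \<in> trunc_cone \<eta> M" unfolding z0_def using M eta by (rule cone_point)
  have coneU: "trunc_cone \<eta> M \<subseteq> upper_half"
    using M unfolding trunc_cone_def upper_half_def by auto
  have FU: "F w \<in> upper_half" if "w \<in> upper_half" for w
    using F_Im[OF mu] that unfolding F_def upper_half_def by auto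
  have main: "H (F w) = w" if w: "w \<in> upper_half" for w
  proof -
    have "(\<lambda>w. H (F w) - w) w = 0"
    proof (rule analytic_continuation[where f="\<lambda>w. H (F w) - w" and S=upper_half and U="H ` trunc_cone \<eta> M" and \<xi>="H z0"])
      show "(\<lambda>w. H (F w) - w) holomorphic_on upper_half"
        unfolding H_def F_def
        by (intro holomorphic_intros F_holo[OF mu]) (use nzc FU[unfolded F_def] in auto)
      show "open upper_half" by (rule upper_open)
      show "connected upper_half" by (rule upper_connected)
      show "H ` trunc_cone \<eta> M \<subseteq> upper_half" using cone by auto
      show "H z0 \<in> upper_half" using cone z0 by auto
      show "w \<in> upper_half" by (rule w)
      show "(\<lambda>w. H (F w) - w) u = 0" if "u \<in> H ` trunc_cone \<eta> M" for u
        using that cone by auto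
      show "H z0 islimpt H ` trunc_cone \<eta> M"
      proof -
        from cone_limpt[OF z0] obtain s where s: "\<And>n::nat. s n \<in> trunc_cone \<eta> M - {z0}"
          and lim: "s \<longlonglongrightarrow> z0" unfolding islimpt_sequential by blast
        have L: "(\<lambda>n. H (s n)) \<longlonglongrightarrow> H z0"
          unfolding H_def using lim nzc[of z0] z0 coneU by (intro tendsto_intros) auto
        have R: "H (s n) \<in> H ` trunc_cone \<eta> M - {H z0}" for n
        proof -
          have sn: "s n \<in> trunc_cone \<eta> M" "s n \<noteq> z0" using s[of n] by auto
          have ne: "H (s n) \<noteq> H z0"
          proof
            assume "H (s n) = H z0"
            moreover have "s n \<in> upper_half" "z0 \<in> upper_half" using sn(1) z0 coneU by auto
            ultimately have "s n = z0" using inj_onD[OF Hinj] by blast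
            then show False using sn(2) by simp
          qed
          show ?thesis using sn(1) ne by blast
        qed
        show ?thesis unfolding islimpt_sequential
          by (rule exI[of _ "\<lambda>n. H (s n)"]) (use L R in simp)
      qed
    qed
    then show ?thesis by simp
  qed
  show ?thesis unfolding UI_def
  proof (intro conjI exI[of _ H])
    show "inj_on (F_transform \<mu>) upper_half"
    proof (rule inj_onI)
      fix a b assume a: "a \<in> upper_half" and b: "b \<in> upper_half"
        and e: "F_transform \<mu> a = F_transform \<mu> b"
      have "a = H (F a)" using main[OF a] by simp
      also have "\<dots> = H (F b)" using e unfolding F_def by simp
      also have "\<dots> = b" using main[OF b] by simp
      finally show "a = b" .
    qed
    show "H holomorphic_on upper_half" by (rule Hholo)
    show "inj_on H upper_half" by (rule Hinj)
    show "\<forall>z\<in>upper_half. H (F_transform \<mu> z) = z" using main F_def by auto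
  qed
qed


lemma K_imag:
  fixes y :: real
  shows "\<i> * complex_of_real y + (1 / (\<i> * complex_of_real y - 1) + 1 / (\<i> * complex_of_real y + 1))
       = \<i> * complex_of_real (y - 2 * y / (y^2 + 1))"
proof -
  have d: "y^2 + 1 > 0" by (simp add: add_nonneg_pos)
  show ?thesis
    using d by (simp add: complex_eq_iff Re_divide Im_divide power2_eq_square add_divide_distrib diff_divide_distrib)
qed

lemma magic_b:
  defines "b \<equiv> (sqrt 19 - 2) / 5"
  shows "b > 0" "b \<noteq> 1 / 2" "b - 2 * b / (b^2 + 1) = (1/2::real) - 2 * (1/2) / ((1/2)^2 + 1)"
proof -
  have s2: "sqrt 19 ^ 2 = (19::real)" by simp
  have "sqrt 4 < sqrt (19::real)" by (subst real_sqrt_less_iff) simp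
  then have s4: "sqrt 19 > (2::real)" by simp
  then show "b > 0" unfolding b_def by simp
  show "b \<noteq> 1 / 2"
  proof
    assume "b = 1 / 2"
    then have e: "sqrt 19 = (9 / 2 :: real)" unfolding b_def by simp
    have "(9/2::real)^2 = 19" using s2 unfolding e .
    then show False by (simp add: power2_eq_square)
  qed
  have q: "5 * b^2 + 4 * b - 3 = 0" unfolding b_def using s2 by (simp add: power2_eq_square field_simps)
  have d: "b^2 + 1 > 0" by (simp add: add_nonneg_pos)
  have "10 * b * (b^2 + 1) - 20 * b + 3 * (b^2 + 1) = (2 * b - 1) * (5 * b^2 + 4 * b - 3)"
    by (simp add: algebra_simps power2_eq_square)
  then have "10 * b * (b^2 + 1) - 20 * b + 3 * (b^2 + 1) = 0" using q by simp
  then have "b - 2 * b / (b^2 + 1) = - 3 / 10" using d by (simp add: field_simps)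
  then show "b - 2 * b / (b^2 + 1) = (1/2::real) - 2 * (1/2) / ((1/2)^2 + 1)" by (simp add: power2_eq_square)
qed

lemma notUI_rho:
  assumes mu: "real_prob_measure \<rho>"
    and vt: "has_voiculescu_transform \<rho> (\<lambda>z. 1 / (z - 1) + 1 / (z + 1))"
  shows "\<not> UI \<rho>"
proof
  assume "UI \<rho>"
  then obtain h where hh: "h holomorphic_on upper_half" and hi: "inj_on h upper_half"
    and hF: "\<forall>z\<in>upper_half. h (F_transform \<rho> z) = z" unfolding UI_def by blast
  define K where "K z = z + (1 / (z - 1) + 1 / (z + 1))" for z :: complex
  from vt obtain \<eta> M where eta: "\<eta> > 0" and M: "M > 0"
    and cone0: "\<forall>z\<in>trunc_cone \<eta> M. z + (1 / (z - 1) + 1 / (z + 1)) \<in> upper_half \<and>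
        F_transform \<rho> (z + (1 / (z - 1) + 1 / (z + 1))) = z"
    unfolding has_voiculescu_transform_def by blast
  have cone: "K z \<in> upper_half \<and> F_transform \<rho> (K z) = z" if "z \<in> trunc_cone \<eta> M" for z
    using cone0 that unfolding K_def by blast
  define z0 where "z0 = \<i> * complex_of_real (M + 1)"
  have z0: "z0 \<in> trunc_cone \<eta> M" unfolding z0_def using M eta by (rule cone_point)
  have coneU: "trunc_cone \<eta> M \<subseteq> upper_half"
    using M unfolding trunc_cone_def upper_half_def by auto
  have nz1: "z - 1 \<noteq> 0" "z + 1 \<noteq> 0" if "z \<in> upper_half" for z :: complex
    using that by (auto simp: upper_half_def complex_eq_iff)
  have hK: "h w = K w" if w: "w \<in> upper_half" for w
  proof -
    have "h w - K w = 0"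
    proof (rule analytic_continuation[where f="\<lambda>w. h w - K w" and S=upper_half
          and U="trunc_cone \<eta> M" and \<xi>=z0])
      show "(\<lambda>w. h w - K w) holomorphic_on upper_half"
        unfolding K_def by (intro holomorphic_intros hh) (use nz1 in auto)
      show "open upper_half" by (rule upper_open)
      show "connected upper_half" by (rule upper_connected)
      show "trunc_cone \<eta> M \<subseteq> upper_half" by (rule coneU)
      show "z0 \<in> upper_half" using z0 coneU by auto
      show "w \<in> upper_half" by (rule w)
      show "z0 islimpt trunc_cone \<eta> M" by (rule cone_limpt[OF z0])
      fix u assume u: "u \<in> trunc_cone \<eta> M"
      have "h u = h (F_transform \<rho> (K u))" using cone[OF u] by simp
      also have "\<dots> = K u" using hF cone[OF u] by blast
      finally show "h u - K u = 0" by simp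
    qed
    then show ?thesis by simp
  qed
  define b :: real where "b = (sqrt 19 - 2) / 5"
  have b: "b > 0" "b \<noteq> 1 / 2" "b - 2 * b / (b^2 + 1) = (1/2::real) - 2 * (1/2) / ((1/2)^2 + 1)"
    using magic_b unfolding b_def by auto
  define p where "p = \<i> * complex_of_real (1/2)"
  define q where "q = \<i> * complex_of_real b"
  have pU: "p \<in> upper_half" and qU: "q \<in> upper_half" using b(1) by (auto simp: p_def q_def upper_half_def)
  have "K p = K q" unfolding K_def p_def q_def K_imag using b(3) by simp
  then have "h p = h q" using hK pU qU by simp
  then have "p = q" using inj_onD[OF hi _ pU qU] by blast
  then show False using b(2) unfolding p_def q_def by (simp add: complex_eq_iff)
qed


theorem mainTheorem12:
  fixes \<nu> lam \<rho> :: "real measure"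
  assumes "real_prob_measure \<nu>"
      and "has_voiculescu_transform \<nu> (\<lambda>z. 1 / (z - 1))"
      and "real_prob_measure lam"
      and "has_voiculescu_transform lam (\<lambda>z. 1 / (z + 1))"
      and "real_prob_measure \<rho>"
      and "has_voiculescu_transform \<rho> (\<lambda>z. 1 / (z - 1) + 1 / (z + 1))"
  shows "UI \<nu> \<and> UI lam \<and> \<not> UI \<rho>"
proof (intro conjI)
  have e1: "(\<lambda>z. 1 / (z - 1)) = (\<lambda>z::complex. 1 / (z - complex_of_real 1))" by simp
  show "UI \<nu>" using assms(2) unfolding e1 by (rule UI_from_phi[OF assms(1)])
  have e2: "(\<lambda>z. 1 / (z + 1)) = (\<lambda>z::complex. 1 / (z - complex_of_real (-1)))" by simp
  show "UI lam" using assms(4) unfolding e2 by (rule UI_from_phi[OF assms(3)])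
  show "\<not> UI \<rho>" by (rule notUI_rho[OF assms(5,6)])
qed

end
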